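(* Let $\eta=3/\sqrt{8\pi e}$. (a) For $n\in\mathbb{N}$ let $h=2/\sqrt n$ and $\mathcal X=\{-\sqrt n+\frac{2k}{\sqrt n}:k=0,1,\dots,n\}$. For a $2\times2$ positive definite matrix $B$ and $\mathbf x=(x_1,x_2)^{\top}$ define $$I_d=\int_{\mathbb{R}}h\sum_{x_1\in\mathcal X}\exp\{-\mathbf x^{\top}B\mathbf x/2\}\,dx_2,\qquad I_c=\int_{\mathbb{R}^2}\exp\{-\mathbf x^{\top}B\mathbf x/2\}\,d\mathbf x.$$ Then $I_d\le(1+\frac{\eta B_{11}}{n})I_c$. (b) For $n,n'\in\mathbb{N}$ let additionally $h'=2/\sqrt{n'}$ and $\mathcal X'=\{-\sqrt{n'}+\frac{2k}{\sqrt{n'}}:k=0,\dots,n'\}$. For a $3\times3$ positive definite $B$ and $\mathbf x=(x_1,x_2,x_3)^{\top}$ define $$I_d=\int_{\mathbb{R}}hh'\sum_{x_1\in\mathcal X}\sum_{x_2\in\mathcal X'}\exp\{-\mathbf x^{\top}B\mathbf x/2\}\,dx_3,\qquad I_c=\int_{\mathbb{R}^3}\exp\{-\mathbf x^{\top}B\mathbf x/2\}\,d\mathbf x.$$ Then $I_d\le(1+\frac{\eta B_{11}}{n})(1+\frac{\eta B_{22}}{n'})I_c$.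
   Context: $B_{ij}$ denotes the $(i,j)$ entry of $B$. *)

theory Defs
  imports "HOL-Analysis.Analysis"
begin

definition eta :: real where
  "eta = 3 / sqrt (8 * pi * exp 1)"

definition grid :: "nat \<Rightarrow> real set" where
  "grid n = (\<lambda>k::nat. - sqrt (real n) + 2 * real k / sqrt (real n)) ` {0..n}"

definition pos_def_mat :: "real^'n^'n \<Rightarrow> bool" where
  "pos_def_mat B \<longleftrightarrow> transpose B = B \<and> (\<forall>x. x \<noteq> 0 \<longrightarrow> x \<bullet> (B *v x) > 0)"

definition gauss :: "real^'n^'n \<Rightarrow> real^'n \<Rightarrow> real" where
  "gauss B x = exp (- (x \<bullet> (B *v x)) / 2)"

end

theory Submission
  imports Defs "HOL-Probability.Distributions"
begin

definition gf :: "real \<Rightarrow> real \<Rightarrow> real \<Rightarrow> real" where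
  "gf b \<mu> x = exp (- (b * (x - \<mu>)\<^sup>2) / 2)"
definition gd :: "real \<Rightarrow> real \<Rightarrow> real \<Rightarrow> real" where
  "gd b \<mu> x = - b * (x - \<mu>) * exp (- (b * (x - \<mu>)\<^sup>2) / 2)"

lemma gf_deriv: "(gf b \<mu> has_real_derivative gd b \<mu> x) (at x)"
  unfolding gf_def gd_def
  by (auto intro!: derivative_eq_intros simp: power2_eq_square field_simps)

lemma gd_deriv: "(gd b \<mu> has_real_derivative (b * (b * (x - \<mu>)\<^sup>2 - 1) * exp (- (b * (x - \<mu>)\<^sup>2) / 2))) (at x)"
  unfolding gd_def
  by (auto intro!: derivative_eq_intros simp: power2_eq_square field_simps)

lemma gf_nonneg: "0 \<le> gf b \<mu> x" by (simp add: gf_def)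
lemma gf_cont: "continuous_on S (gf b \<mu>)"
  unfolding gf_def by (intro continuous_intros) auto

lemma gauss_has_integral:
  assumes b: "b > 0"
  shows "(gf b \<mu> has_integral sqrt (2 * pi / b)) UNIV"
proof -
  define \<sigma> where "\<sigma> = 1 / sqrt b"
  have s: "\<sigma> > 0" using b by (simp add: \<sigma>_def)
  have s2: "\<sigma>\<^sup>2 = 1 / b" using b by (simp add: \<sigma>_def power_divide)
  have "(normal_density \<mu> \<sigma> has_integral 1) UNIV"
    using has_integral_integral_lborel[OF integrable_normal_density[where \<mu>=\<mu> and \<sigma>=\<sigma>]] integral_normal_density[where \<mu>=\<mu> and \<sigma>=\<sigma>] s by simp
  then have "((\<lambda>x. sqrt (2 * pi / b) * normal_density \<mu> \<sigma> x) has_integral sqrt (2 * pi / b) * 1) UNIV"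
    by (rule has_integral_mult_right)
  moreover have "sqrt (2 * pi / b) * normal_density \<mu> \<sigma> x = gf b \<mu> x" for x
  proof -
    have "sqrt (2 * pi * \<sigma>\<^sup>2) = sqrt (2 * pi / b)" using s2 by simp
    moreover have "- (x - \<mu>)\<^sup>2 / (2 * \<sigma>\<^sup>2) = - (b * (x - \<mu>)\<^sup>2) / 2" using s2 b by (simp add: s2)
    ultimately show ?thesis using b unfolding normal_density_def gf_def by simp
  qed
  ultimately show ?thesis by simp
qed

definition Mb :: "real \<Rightarrow> real" where "Mb b = sqrt b * exp (-1/2)"

lemma te_bound: "t * exp (- t\<^sup>2 / 2) \<le> exp (-1/2)" for t :: real
proof -
  have "t \<le> (t\<^sup>2 + 1) / 2" using sum_squares_ge_zero[of "t - 1" 0]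
    by (simp add: power2_eq_square algebra_simps)
  also have "\<dots> = 1 + (t\<^sup>2 - 1)/2" by (simp add: field_simps)
  also have "\<dots> \<le> exp ((t\<^sup>2 - 1)/2)" by (rule exp_ge_add_one_self)
  finally have "t * exp (- t\<^sup>2 / 2) \<le> exp ((t\<^sup>2 - 1)/2) * exp (- t\<^sup>2 / 2)"
    by (intro mult_right_mono) auto
  also have "\<dots> = exp (-1/2)" by (simp add: exp_add[symmetric] field_simps)
  finally show ?thesis .
qed

lemma gd_bound:
  assumes b: "b > 0" shows "\<bar>gd b \<mu> x\<bar> \<le> Mb b"
proof -
  define t where "t = sqrt b * \<bar>x - \<mu>\<bar>"
  have bt: "b * (x - \<mu>)\<^sup>2 = t\<^sup>2" using b by (simp add: t_def power_mult_distrib)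
  have e: "\<bar>gd b \<mu> x\<bar> = b * \<bar>x - \<mu>\<bar> * exp (- (b * (x - \<mu>)\<^sup>2) / 2)"
    unfolding gd_def using b by (simp add: abs_mult)
  have s: "sqrt b * t = b * \<bar>x - \<mu>\<bar>"
    unfolding t_def using b by (simp only: mult.assoc[symmetric] real_sqrt_mult_self)
  have "\<bar>gd b \<mu> x\<bar> = (sqrt b * t) * exp (- t\<^sup>2 / 2)"
    unfolding e s bt ..
  also have "\<dots> = sqrt b * (t * exp (- t\<^sup>2 / 2))" by (simp only: mult.assoc)
  also have "\<dots> \<le> sqrt b * exp (-1/2)"
    using b by (intro mult_left_mono te_bound) auto
  finally show ?thesis by (simp add: Mb_def)
qed

lemma gd2_nonneg:
  fixes b x \<mu> :: real
  assumes b: "b > 0" and "1 \<le> b * (x - \<mu>)\<^sup>2"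
  shows "0 \<le> b * (b * (x - \<mu>)\<^sup>2 - 1) * exp (- (b * (x - \<mu>)\<^sup>2) / 2)"
  using assms by (intro mult_nonneg_nonneg) auto

lemma gd2_nonpos:
  fixes b x \<mu> :: real
  assumes b: "b > 0" and "b * (x - \<mu>)\<^sup>2 \<le> 1"
  shows "b * (b * (x - \<mu>)\<^sup>2 - 1) * exp (- (b * (x - \<mu>)\<^sup>2) / 2) \<le> 0"
proof -
  have "b * (b * (x - \<mu>)\<^sup>2 - 1) \<le> 0" using assms by (intro mult_nonneg_nonpos) auto
  then show ?thesis by (rule mult_nonpos_nonneg) simp
qed

lemma far_sq:
  assumes b: "b > 0" and "1 / sqrt b \<le> \<bar>y\<bar>" shows "1 \<le> b * y\<^sup>2"
proof -
  have "(1 / sqrt b)\<^sup>2 \<le> \<bar>y\<bar>\<^sup>2" using assms by (intro power_mono) auto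
  then have "1 / b \<le> y\<^sup>2" using b by (simp add: power_divide)
  then show ?thesis using b by (simp add: field_simps)
qed

lemma near_sq:
  assumes b: "b > 0" and "\<bar>y\<bar> \<le> 1 / sqrt b" shows "b * y\<^sup>2 \<le> 1"
proof -
  have "\<bar>y\<bar>\<^sup>2 \<le> (1 / sqrt b)\<^sup>2" using assms by (intro power_mono) auto
  then have "y\<^sup>2 \<le> 1 / b" using b by (simp add: power_divide)
  then show ?thesis using b by (simp add: field_simps)
qed

lemma gd_mono_left:
  assumes b: "b > 0" and "x \<le> y" "y \<le> \<mu> - 1 / sqrt b"
  shows "gd b \<mu> x \<le> gd b \<mu> y"
  using assms(2)
proof (rule DERIV_nonneg_imp_nondecreasing)
  fix z assume "x \<le> z" "z \<le> y"
  then have "1 \<le> b * (z - \<mu>)\<^sup>2" using assms by (intro far_sq) auto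
  then show "\<exists>d. (gd b \<mu> has_real_derivative d) (at z) \<and> 0 \<le> d"
    using gd_deriv gd2_nonneg[OF b] by blast
qed

lemma gd_mono_right:
  assumes b: "b > 0" and "x \<le> y" "\<mu> + 1 / sqrt b \<le> x"
  shows "gd b \<mu> x \<le> gd b \<mu> y"
  using assms(2)
proof (rule DERIV_nonneg_imp_nondecreasing)
  fix z assume "x \<le> z" "z \<le> y"
  then have "1 \<le> b * (z - \<mu>)\<^sup>2" using assms by (intro far_sq) auto
  then show "\<exists>d. (gd b \<mu> has_real_derivative d) (at z) \<and> 0 \<le> d"
    using gd_deriv gd2_nonneg[OF b] by blast
qed

lemma gd_anti_mid:
  assumes b: "b > 0" and "x \<le> y" "\<mu> - 1 / sqrt b \<le> x" "y \<le> \<mu> + 1 / sqrt b"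
  shows "gd b \<mu> y \<le> gd b \<mu> x"
  using assms(2)
proof (rule DERIV_nonpos_imp_nonincreasing)
  fix z assume "x \<le> z" "z \<le> y"
  then have "b * (z - \<mu>)\<^sup>2 \<le> 1" using assms by (intro near_sq) auto
  then show "\<exists>d. (gd b \<mu> has_real_derivative d) (at z) \<and> d \<le> 0"
    using gd_deriv gd2_nonpos[OF b] by blast
qed

lemma sqb_facts: assumes b: "b > 0" shows "b * (1 / sqrt b)\<^sup>2 = 1" "b * (1 / sqrt b) = sqrt b"
  using b by (simp_all add: power_divide) (metis real_div_sqrt less_le)

lemma gd_left_pt: assumes b: "b > 0" shows "gd b \<mu> (\<mu> - 1 / sqrt b) = Mb b"
proof -
  have "gd b \<mu> (\<mu> - 1 / sqrt b) = (b * (1 / sqrt b)) * exp (- (b * (1 / sqrt b)\<^sup>2) / 2)"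
    by (simp only: gd_def) (simp add: power2_eq_square)
  also have "\<dots> = Mb b" by (simp only: sqb_facts[OF b] Mb_def)
  finally show ?thesis .
qed
lemma gd_right_pt: assumes b: "b > 0" shows "gd b \<mu> (\<mu> + 1 / sqrt b) = - Mb b"
proof -
  have "gd b \<mu> (\<mu> + 1 / sqrt b) = - (b * (1 / sqrt b)) * exp (- (b * (1 / sqrt b)\<^sup>2) / 2)"
    by (simp only: gd_def) (simp add: power2_eq_square)
  also have "\<dots> = - Mb b" by (simp only: sqb_facts[OF b] Mb_def)
  finally show ?thesis .
qed

definition FF :: "real \<Rightarrow> real \<Rightarrow> real \<Rightarrow> real" where
  "FF b \<mu> x = (if x \<le> \<mu> - 1 / sqrt b then gd b \<mu> x
     else if x \<le> \<mu> + 1 / sqrt b then Mb b else gd b \<mu> x + 2 * Mb b)"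
definition ph :: "real \<Rightarrow> real \<Rightarrow> real \<Rightarrow> real" where
  "ph b \<mu> x = FF b \<mu> x - gd b \<mu> x"

lemma FF_le_Mb: assumes b: "b > 0" and "x \<le> \<mu> + 1 / sqrt b" shows "FF b \<mu> x \<le> Mb b"
proof -
  have "gd b \<mu> x \<le> Mb b" using gd_bound[OF b, of \<mu> x] by linarith
  then show ?thesis using assms(2) unfolding FF_def by simp
qed

lemma FF_ge_Mb: assumes b: "b > 0" and "\<mu> - 1 / sqrt b < x" shows "Mb b \<le> FF b \<mu> x"
proof -
  have "- Mb b \<le> gd b \<mu> x" using gd_bound[OF b, of \<mu> x] by linarith
  then show ?thesis using assms(2) unfolding FF_def by simp
qed

lemma FF_mono:
  assumes b: "b > 0" and xy: "x \<le> y" shows "FF b \<mu> x \<le> FF b \<mu> y"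
proof (cases "y \<le> \<mu> - 1 / sqrt b")
  case True
  then have "x \<le> \<mu> - 1 / sqrt b" using xy by linarith
  then show ?thesis using True gd_mono_left[OF b xy True] unfolding FF_def by simp
next
  case yL: False
  show ?thesis
  proof (cases "x \<le> \<mu> + 1 / sqrt b")
    case True
    then show ?thesis using FF_le_Mb[OF b True] FF_ge_Mb[OF b, of \<mu> y] yL by linarith
  next
    case False
    then have "\<mu> + 1 / sqrt b \<le> x" by linarith
    moreover have "0 < 1 / sqrt b" using b by simp
    then have "\<not> x \<le> \<mu> - 1 / sqrt b" "\<not> y \<le> \<mu> + 1 / sqrt b" "\<not> y \<le> \<mu> - 1 / sqrt b"
      using False xy by linarith+
    ultimately show ?thesis using gd_mono_right[OF b xy] False unfolding FF_def by simp
  qed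
qed

lemma ph_range:
  assumes b: "b > 0" shows "0 \<le> ph b \<mu> x" "ph b \<mu> x \<le> 2 * Mb b"
proof -
  have "- Mb b \<le> gd b \<mu> x" "gd b \<mu> x \<le> Mb b" using gd_bound[OF b, of \<mu> x] by linarith+
  then show "0 \<le> ph b \<mu> x" "ph b \<mu> x \<le> 2 * Mb b" unfolding ph_def FF_def by auto
qed

lemma ph_mono:
  assumes b: "b > 0" and xy: "x \<le> y" shows "ph b \<mu> x \<le> ph b \<mu> y"
proof (cases "x \<le> \<mu> - 1 / sqrt b")
  case True
  then have "ph b \<mu> x = 0" unfolding ph_def FF_def by simp
  then show ?thesis using ph_range[OF b, of \<mu> y] by simp
next
  case xL: False
  show ?thesis
  proof (cases "\<mu> + 1 / sqrt b < y")
    case True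
    moreover have "0 < 1 / sqrt b" using b by simp
    ultimately have "\<not> y \<le> \<mu> - 1 / sqrt b" by linarith
    then have "ph b \<mu> y = 2 * Mb b" using True unfolding ph_def FF_def by simp
    then show ?thesis using ph_range[OF b, of \<mu> x] by simp
  next
    case False
    then have "y \<le> \<mu> + 1 / sqrt b" by simp
    then have "ph b \<mu> x = Mb b - gd b \<mu> x" "ph b \<mu> y = Mb b - gd b \<mu> y"
      using xL xy unfolding ph_def FF_def by auto
    moreover have "gd b \<mu> y \<le> gd b \<mu> x"
      using gd_anti_mid[OF b xy] xL \<open>y \<le> \<mu> + 1 / sqrt b\<close> by simp
    ultimately show ?thesis by simp
  qed
qed

lemma gf_chain:
  "(g has_real_derivative g') (at x within S) \<Longrightarrow>
   ((\<lambda>x. gf b \<mu> (g x)) has_real_derivative gd b \<mu> (g x) * g') (at x within S)"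
  by (rule DERIV_chain2[OF gf_deriv])

lemma gf_int: "gf b \<mu> integrable_on {a..c}"
  by (rule integrable_continuous_real[OF gf_cont])

lemma pw:
  assumes b: "b > 0" and u: "0 \<le> u" "u \<le> h / 2"
  shows "2 * gf b \<mu> m \<le> gf b \<mu> (m + u) + gf b \<mu> (m - u) + u * (ph b \<mu> (m + h/2) - ph b \<mu> (m - h/2))"
proof -
  define Du where "Du = ph b \<mu> (m + u) - ph b \<mu> (m - u)"
  have "(\<lambda>s. gf b \<mu> (m + s) + gf b \<mu> (m - s) + s * Du) 0 \<le> (\<lambda>s. gf b \<mu> (m + s) + gf b \<mu> (m - s) + s * Du) u"
  proof (rule DERIV_nonneg_imp_nondecreasing[OF u(1)])
    fix s assume s: "0 \<le> s" "s \<le> u"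
    have d: "((\<lambda>s. gf b \<mu> (m + s) + gf b \<mu> (m - s) + s * Du) has_real_derivative
        (gd b \<mu> (m + s) * 1 + gd b \<mu> (m - s) * (-1) + 1 * Du)) (at s)"
    proof -
      have d1: "((\<lambda>s. gf b \<mu> (m + s)) has_real_derivative gd b \<mu> (m + s) * 1) (at s)"
        by (intro gf_chain derivative_eq_intros) auto
      have d2: "((\<lambda>s. gf b \<mu> (m - s)) has_real_derivative gd b \<mu> (m - s) * (-1)) (at s)"
        by (intro gf_chain derivative_eq_intros) auto
      have d3: "((\<lambda>s. s * Du) has_real_derivative 1 * Du) (at s)"
        by (intro derivative_eq_intros) auto
      show ?thesis using DERIV_add[OF DERIV_add[OF d1 d2] d3] by simp
    qed
    have "FF b \<mu> (m - s) \<le> FF b \<mu> (m + s)" using s by (intro FF_mono[OF b]) auto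
    moreover have "ph b \<mu> (m + s) \<le> ph b \<mu> (m + u)" "ph b \<mu> (m - u) \<le> ph b \<mu> (m - s)"
      using s by (intro ph_mono[OF b]; simp)+
    ultimately have "0 \<le> gd b \<mu> (m + s) * 1 + gd b \<mu> (m - s) * (-1) + 1 * Du"
      unfolding Du_def ph_def by simp
    then show "\<exists>y. ((\<lambda>s. gf b \<mu> (m + s) + gf b \<mu> (m - s) + s * Du) has_real_derivative y) (at s) \<and> 0 \<le> y"
      using d by blast
  qed
  then have "2 * gf b \<mu> m \<le> gf b \<mu> (m + u) + gf b \<mu> (m - u) + u * Du" by simp
  moreover have "Du \<le> ph b \<mu> (m + h/2) - ph b \<mu> (m - h/2)"
    using ph_mono[OF b, of "m + u" "m + h/2" \<mu>] ph_mono[OF b, of "m - h/2" "m - u" \<mu>] u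
    unfolding Du_def by simp
  then have "u * Du \<le> u * (ph b \<mu> (m + h/2) - ph b \<mu> (m - h/2))"
    using u by (intro mult_left_mono) auto
  ultimately show ?thesis by simp
qed

lemma P_deriv:
  assumes "a < x" "x < c"
  shows "((\<lambda>x. integral {a..x} (gf b \<mu>)) has_real_derivative gf b \<mu> x) (at x)"
proof -
  have "((\<lambda>x. integral {a..x} (gf b \<mu>)) has_real_derivative gf b \<mu> x) (at x within {a..c})"
    using assms by (intro integral_has_real_derivative gf_cont) auto
  moreover have "at x within {a..c} = at x" using assms by (intro at_within_interior) auto
  ultimately show ?thesis by simp
qed

lemma tile:
  assumes b: "b > 0" and h: "h > 0"
  shows "h * gf b \<mu> m \<le> integral {m - h/2 .. m + h/2} (gf b \<mu>)
           + h\<^sup>2 / 8 * (ph b \<mu> (m + h/2) - ph b \<mu> (m - h/2))"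
proof -
  define P where "P x = integral {m - h .. x} (gf b \<mu>)" for x
  define \<Delta> where "\<Delta> = ph b \<mu> (m + h/2) - ph b \<mu> (m - h/2)"
  define E where "E u = P (m + u) - P (m - u) - 2 * u * gf b \<mu> m + \<Delta> * (u * u) / 2" for u
  have "E 0 \<le> E (h/2)"
  proof (rule DERIV_nonneg_imp_nondecreasing[of 0 "h/2" E])
    show "0 \<le> h/2" using h by simp
  next
    fix u assume u: "0 \<le> u" "u \<le> h/2"
    have p1: "(P has_real_derivative gf b \<mu> (m + u)) (at (m + u))"
      unfolding P_def using u h by (intro P_deriv[where c="m + h"]) auto
    have p2: "(P has_real_derivative gf b \<mu> (m - u)) (at (m - u))"
      unfolding P_def using u h by (intro P_deriv[where c="m + h"]) auto
    have d1: "((\<lambda>u. P (m + u)) has_real_derivative gf b \<mu> (m + u) * 1) (at u)"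
      apply (rule DERIV_chain2[where f=P and g="\<lambda>u. m + u"])
       apply (rule p1)
      by (auto intro!: derivative_eq_intros)
    have d2: "((\<lambda>u. P (m - u)) has_real_derivative gf b \<mu> (m - u) * (-1)) (at u)"
      apply (rule DERIV_chain2[where f=P and g="\<lambda>u. m - u"])
       apply (rule p2)
      by (auto intro!: derivative_eq_intros)
    have d3: "((\<lambda>u. - 2 * u * gf b \<mu> m + \<Delta> * (u * u) / 2) has_real_derivative (- 2 * gf b \<mu> m + \<Delta> * u)) (at u)"
      by (rule derivative_eq_intros refl | simp)+
    have "(E has_real_derivative (gf b \<mu> (m + u) * 1 - gf b \<mu> (m - u) * (-1) + (- 2 * gf b \<mu> m + \<Delta> * u))) (at u)"
      using DERIV_add[OF DERIV_diff[OF d1 d2] d3] unfolding E_def by (simp add: algebra_simps)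
    moreover have "0 \<le> gf b \<mu> (m + u) * 1 - gf b \<mu> (m - u) * (-1) + (- 2 * gf b \<mu> m + \<Delta> * u)"
      using pw[OF b u, of \<mu> m] unfolding \<Delta>_def by (simp add: algebra_simps)
    ultimately show "\<exists>y. (E has_real_derivative y) (at u) \<and> 0 \<le> y" by blast
  qed
  moreover have "E 0 = 0" unfolding E_def by simp
  moreover have "P (m + h/2) - P (m - h/2) = integral {m - h/2 .. m + h/2} (gf b \<mu>)"
    using Henstock_Kurzweil_Integration.integral_combine[where a="m - h" and c="m - h/2" and b="m + h/2" and f="gf b \<mu>"] h gf_int unfolding P_def by simp
  ultimately have "0 \<le> integral {m - h/2 .. m + h/2} (gf b \<mu>) - 2 * (h/2) * gf b \<mu> m + \<Delta> * ((h/2) * (h/2)) / 2"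
    unfolding E_def by simp
  moreover have "\<Delta> * ((h/2) * (h/2)) / 2 = h\<^sup>2 / 8 * \<Delta>" by (simp add: power2_eq_square)
  moreover have "2 * (h/2) * gf b \<mu> m = h * gf b \<mu> m" by simp
  ultimately show ?thesis unfolding \<Delta>_def by linarith
qed

lemma riemann_bound:
  assumes b: "b > 0" and h: "h > 0"
  shows "h * (\<Sum>k<N. gf b \<mu> (s0 + real k * h)) \<le> sqrt (2 * pi / b) + h\<^sup>2 / 4 * Mb b"
proof -
  define T0 where "T0 = s0 - h/2"
  define t where "t k = T0 + real k * h" for k
  define R where "R x = integral {T0..x} (gf b \<mu>) + h\<^sup>2 / 8 * ph b \<mu> x" for x
  have step: "h * gf b \<mu> (s0 + real k * h) \<le> R (t (Suc k)) - R (t k)" for k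
  proof -
    have m1: "s0 + real k * h - h/2 = t k" and m2: "s0 + real k * h + h/2 = t (Suc k)"
      unfolding t_def T0_def by (simp_all add: algebra_simps)
    have le1: "T0 \<le> t k" unfolding t_def using h by simp
    have le2: "t k \<le> t (Suc k)" unfolding t_def using h by simp
    have c: "integral {T0..t k} (gf b \<mu>) + integral {t k..t (Suc k)} (gf b \<mu>) = integral {T0..t (Suc k)} (gf b \<mu>)"
      by (rule Henstock_Kurzweil_Integration.integral_combine[OF le1 le2 gf_int])
    have "h * gf b \<mu> (s0 + real k * h) \<le> integral {t k..t (Suc k)} (gf b \<mu>)
           + h\<^sup>2 / 8 * (ph b \<mu> (t (Suc k)) - ph b \<mu> (t k))"
      using tile[OF b h, of \<mu> "s0 + real k * h"] unfolding m1 m2 .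
    then show ?thesis unfolding R_def using c by (simp add: algebra_simps)
  qed
  have "h * (\<Sum>k<N. gf b \<mu> (s0 + real k * h)) = (\<Sum>k<N. h * gf b \<mu> (s0 + real k * h))"
    by (simp add: sum_distrib_left)
  also have "\<dots> \<le> (\<Sum>k<N. R (t (Suc k)) - R (t k))"
    by (rule sum_mono) (rule step)
  also have "\<dots> = R (t N) - R (t 0)" by (rule sum_lessThan_telescope)
  also have "\<dots> \<le> sqrt (2 * pi / b) + h\<^sup>2 / 4 * Mb b"
  proof -
    have t0: "t 0 = T0" unfolding t_def by simp
    have "integral {T0..T0} (gf b \<mu>) = 0" by simp
    have I: "(gf b \<mu> has_integral sqrt (2 * pi / b)) UNIV" by (rule gauss_has_integral[OF b])
    have "integral {T0..t N} (gf b \<mu>) \<le> integral UNIV (gf b \<mu>)"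
      by (rule integral_subset_le) (use I gf_int gf_nonneg in auto)
    also have "\<dots> = sqrt (2 * pi / b)" using I by (rule integral_unique)
    finally have i1: "integral {T0..t N} (gf b \<mu>) \<le> sqrt (2 * pi / b)" .
    have "ph b \<mu> (t N) - ph b \<mu> T0 \<le> 2 * Mb b" using ph_range(2)[OF b, of \<mu> "t N"] ph_range(1)[OF b, of \<mu> T0] by linarith
    then have "h\<^sup>2 / 8 * (ph b \<mu> (t N) - ph b \<mu> T0) \<le> h\<^sup>2 / 8 * (2 * Mb b)"
      by (intro mult_left_mono) auto
    then show ?thesis using i1 unfolding R_def t0 by (simp add: algebra_simps)
  qed
  finally show ?thesis .
qed

lemma sqrt_e: "exp (-1/2 :: real) = 1 / sqrt (exp 1)"
proof -
  have "sqrt (exp 1) = exp (1/2 :: real)"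
  proof (rule real_sqrt_unique)
    have "exp (1/2::real) * exp (1/2) = exp (1/2 + 1/2)" by (rule exp_add[symmetric])
    then show "(exp (1/2::real))\<^sup>2 = exp 1" by (simp add: power2_eq_square)
  qed simp
  have m: "(-1/2 :: real) = - (1/2)" by simp
  show ?thesis unfolding m exp_minus inverse_eq_divide \<open>sqrt (exp 1) = exp (1/2)\<close> ..
qed

lemma Mb_eta:
  assumes b: "b > 0" shows "Mb b \<le> eta * b * sqrt (2 * pi / b)"
proof -
  define q where "q = sqrt (2 * pi / b)"
  have q: "q > 0" using b by (simp add: q_def)
  have "sqrt (8 * pi * exp 1) = sqrt (4 * (2 * pi / b) * (b * exp 1))" using b by simp
  also have "\<dots> = sqrt 4 * q * (sqrt b * sqrt (exp 1))"
    unfolding q_def by (simp only: real_sqrt_mult)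
  also have "sqrt 4 = (2::real)" by simp
  finally have s8: "sqrt (8 * pi * exp 1) = 2 * q * (sqrt b * sqrt (exp 1))" .
  have sb: "b = sqrt b * sqrt b" using b by simp
  have "eta * b * q = 3 * (sqrt b * sqrt b) * q / (2 * q * (sqrt b * sqrt (exp 1)))"
    unfolding eta_def s8 using sb by simp
  also have "\<dots> = 3 / 2 * (sqrt b / sqrt (exp 1))" using q b by (simp add: field_simps)
  finally have e: "eta * b * q = 3 / 2 * (sqrt b / sqrt (exp 1))" .
  have "Mb b = sqrt b / sqrt (exp 1)" unfolding Mb_def sqrt_e by simp
  moreover have "0 \<le> sqrt b / sqrt (exp 1)" using b by simp
  ultimately show ?thesis using e unfolding q_def by linarith
qed

lemma grid_bound:
  assumes b: "b > 0" and n: "n \<ge> 1"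
  shows "(2 / sqrt (real n)) * (\<Sum>x\<in>grid n. gf b \<mu> x) \<le> (1 + eta * b / real n) * sqrt (2 * pi / b)"
proof -
  define h where "h = 2 / sqrt (real n)"
  have h: "h > 0" using n by (simp add: h_def)
  have inj: "inj_on (\<lambda>k::nat. - sqrt (real n) + 2 * real k / sqrt (real n)) {0..n}"
    using n by (auto simp: inj_on_def)
  have "(\<Sum>x\<in>grid n. gf b \<mu> x) = (\<Sum>k\<in>{0..n}. gf b \<mu> (- sqrt (real n) + 2 * real k / sqrt (real n)))"
    unfolding grid_def by (subst sum.reindex[OF inj]) simp
  also have "\<dots> = (\<Sum>k<Suc n. gf b \<mu> (- sqrt (real n) + real k * h))"
    by (intro sum.cong) (auto simp: h_def mult.commute)
  finally have eq: "(\<Sum>x\<in>grid n. gf b \<mu> x) = (\<Sum>k<Suc n. gf b \<mu> (- sqrt (real n) + real k * h))" .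
  have h2: "h\<^sup>2 / 4 = 1 / real n" using n by (simp add: h_def power_divide)
  have "h * (\<Sum>x\<in>grid n. gf b \<mu> x) \<le> sqrt (2 * pi / b) + h\<^sup>2 / 4 * Mb b"
    unfolding eq by (rule riemann_bound[OF b h])
  also have "\<dots> = sqrt (2 * pi / b) + Mb b / real n" unfolding h2 by simp
  also have "\<dots> \<le> sqrt (2 * pi / b) + eta * b * sqrt (2 * pi / b) / real n"
    using Mb_eta[OF b] n by (intro add_left_mono divide_right_mono) auto
  also have "\<dots> = (1 + eta * b / real n) * sqrt (2 * pi / b)" by (simp add: algebra_simps)
  finally show ?thesis unfolding h_def .
qed

lemma basis_prod:
  "(\<Prod>b\<in>(Basis::(real^'n) set). f b) = (\<Prod>i\<in>UNIV. f (axis i 1))"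
proof -
  have B: "(Basis::(real^'n) set) = range (\<lambda>i. axis i 1)" by (auto simp: Basis_vec_def)
  have inj: "inj (\<lambda>i::'n. axis i (1::real))" by (auto simp: inj_def axis_eq_axis)
  show ?thesis unfolding B by (subst prod.reindex[OF inj]) simp
qed

definition T2 :: "real \<times> real \<Rightarrow> real^2" where
  "T2 p = fst p *\<^sub>R axis 1 1 + snd p *\<^sub>R axis 2 1"

lemma T2_nth [simp]: "T2 p $ 1 = fst p" "T2 p $ 2 = snd p"
  by (simp_all add: T2_def axis_def)

lemma T2_vector: "T2 (a, b) = vector [a, b]"
  by (simp add: vec_eq_iff forall_2)

lemma T2_meas: "T2 \<in> borel_measurable (lborel \<Otimes>\<^sub>M lborel)"
proof -
  have "continuous_on UNIV T2" unfolding T2_def by (intro continuous_intros)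
  then have "T2 \<in> borel_measurable borel" by (rule borel_measurable_continuous_onI)
  then show ?thesis unfolding lborel_prod by simp
qed

lemma lborel_T2: "distr (lborel \<Otimes>\<^sub>M lborel) borel T2 = (lborel :: (real^2) measure)"
proof (rule lborel_eqI[symmetric])
  fix l u :: "real^2" assume le: "\<And>b. b \<in> Basis \<Longrightarrow> l \<bullet> b \<le> u \<bullet> b"
  have lu: "l $ i \<le> u $ i" for i using le[of "axis i 1"] by (simp add: inner_axis)
  have pre: "T2 -` box l u \<inter> space (lborel \<Otimes>\<^sub>M lborel) = {l$1<..<u$1} \<times> {l$2<..<u$2}"
    by (auto simp: space_pair_measure mem_box_cart forall_2)
  have "emeasure (distr (lborel \<Otimes>\<^sub>M lborel) borel T2) (box l u)
      = emeasure (lborel \<Otimes>\<^sub>M lborel) ({l$1<..<u$1} \<times> {l$2<..<u$2})"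
    by (subst emeasure_distr[OF T2_meas]) (auto simp: pre)
  also have "\<dots> = ennreal (u$1 - l$1) * ennreal (u$2 - l$2)"
    by (subst lborel.emeasure_pair_measure_Times) (auto simp: lu)
  also have "\<dots> = ennreal ((u$1 - l$1) * (u$2 - l$2))"
    using lu by (simp add: ennreal_mult)
  also have "(u$1 - l$1) * (u$2 - l$2) = (\<Prod>b\<in>Basis. (u - l) \<bullet> b)"
    unfolding basis_prod by (simp add: inner_axis UNIV_2)
  finally show "emeasure (distr (lborel \<Otimes>\<^sub>M lborel) borel T2) (box l u) = (\<Prod>b\<in>Basis. (u - l) \<bullet> b)" .
qed simp

lemma nn2:
  fixes g :: "real^2 \<Rightarrow> ennreal"
  assumes g: "g \<in> borel_measurable borel"
  shows "(\<integral>\<^sup>+x. g x \<partial>lborel) = (\<integral>\<^sup>+x1. \<integral>\<^sup>+x2. g (T2 (x1, x2)) \<partial>lborel \<partial>lborel)"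
proof -
  have gm: "(\<lambda>p. g (T2 p)) \<in> borel_measurable (lborel \<Otimes>\<^sub>M lborel)"
    using measurable_comp[OF T2_meas g] by (simp add: comp_def)
  have "(\<integral>\<^sup>+x. g x \<partial>lborel) = (\<integral>\<^sup>+x. g x \<partial>distr (lborel \<Otimes>\<^sub>M lborel) borel T2)"
    by (simp add: lborel_T2)
  also have "\<dots> = (\<integral>\<^sup>+p. g (T2 p) \<partial>(lborel \<Otimes>\<^sub>M lborel))"
    by (rule nn_integral_distr[OF T2_meas]) (use g in simp)
  also have "\<dots> = (\<integral>\<^sup>+x1. \<integral>\<^sup>+x2. g (T2 (x1, x2)) \<partial>lborel \<partial>lborel)"
    by (rule lborel.nn_integral_fst[symmetric, OF gm])
  finally show ?thesis .
qed

lemma prod_UNIV3: "(\<Prod>i\<in>(UNIV::3 set). f i) = f 1 * f 2 * (f 3 :: real)"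
proof -
  have "(1::3) \<notin> {2, 3}" "(2::3) \<notin> {3}" by auto
  then show ?thesis unfolding UNIV_3 by (simp add: mult.assoc)
qed

definition T3 :: "real \<times> (real \<times> real) \<Rightarrow> real^3" where
  "T3 p = fst p *\<^sub>R axis 1 1 + fst (snd p) *\<^sub>R axis 2 1 + snd (snd p) *\<^sub>R axis 3 1"

lemma T3_nth [simp]: "T3 p $ 1 = fst p" "T3 p $ 2 = fst (snd p)" "T3 p $ 3 = snd (snd p)"
  by (simp_all add: T3_def axis_def)

lemma T3_vector: "T3 (a, b, c) = vector [a, b, c]"
  by (simp add: vec_eq_iff forall_3)

lemma T3_cont: "continuous_on UNIV T3" unfolding T3_def by (intro continuous_intros)

lemma T3_meas: "T3 \<in> borel_measurable (lborel \<Otimes>\<^sub>M lborel)"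
proof -
  have "T3 \<in> borel_measurable borel" by (rule borel_measurable_continuous_onI[OF T3_cont])
  then show ?thesis unfolding lborel_prod by simp
qed

lemma lborel_T3: "distr (lborel \<Otimes>\<^sub>M lborel) borel T3 = (lborel :: (real^3) measure)"
proof (rule lborel_eqI[symmetric])
  fix l u :: "real^3" assume le: "\<And>b. b \<in> Basis \<Longrightarrow> l \<bullet> b \<le> u \<bullet> b"
  have lu: "l $ i \<le> u $ i" for i using le[of "axis i 1"] by (simp add: inner_axis)
  have pre: "T3 -` box l u \<inter> space (lborel \<Otimes>\<^sub>M lborel) = {l$1<..<u$1} \<times> ({l$2<..<u$2} \<times> {l$3<..<u$3})"
    by (auto simp: space_pair_measure mem_box_cart forall_3)
  have bc: "{l$2<..<u$2} \<times> {l$3<..<u$3} \<in> sets (lborel :: (real \<times> real) measure)"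
    using borel_open[OF open_Times[OF open_greaterThanLessThan open_greaterThanLessThan]] by simp
  have e2: "emeasure (lborel :: (real \<times> real) measure) ({l$2<..<u$2} \<times> {l$3<..<u$3}) = ennreal (u$2 - l$2) * ennreal (u$3 - l$3)"
    unfolding lborel_prod[symmetric] by (subst lborel.emeasure_pair_measure_Times) (auto simp: lu)
  have "emeasure (distr (lborel \<Otimes>\<^sub>M lborel) borel T3) (box l u)
      = emeasure (lborel \<Otimes>\<^sub>M lborel) ({l$1<..<u$1} \<times> ({l$2<..<u$2} \<times> {l$3<..<u$3}))"
    by (subst emeasure_distr[OF T3_meas]) (auto simp: pre)
  also have "\<dots> = ennreal (u$1 - l$1) * (ennreal (u$2 - l$2) * ennreal (u$3 - l$3))"
    by (subst lborel.emeasure_pair_measure_Times[OF _ bc]) (auto simp: lu e2)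
  also have "\<dots> = ennreal ((u$1 - l$1) * (u$2 - l$2) * (u$3 - l$3))"
    using lu by (simp add: ennreal_mult mult.assoc)
  also have "(u$1 - l$1) * (u$2 - l$2) * (u$3 - l$3) = (\<Prod>b\<in>Basis. (u - l) \<bullet> b)"
    unfolding basis_prod prod_UNIV3 by (simp add: inner_axis)
  finally show "emeasure (distr (lborel \<Otimes>\<^sub>M lborel) borel T3) (box l u) = (\<Prod>b\<in>Basis. (u - l) \<bullet> b)" .
qed simp

lemma nn3:
  fixes g :: "real^3 \<Rightarrow> ennreal"
  assumes g: "g \<in> borel_measurable borel"
  shows "(\<integral>\<^sup>+x. g x \<partial>lborel) = (\<integral>\<^sup>+x1. \<integral>\<^sup>+x2. \<integral>\<^sup>+x3. g (T3 (x1, x2, x3)) \<partial>lborel \<partial>lborel \<partial>lborel)"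
proof -
  have gm: "(\<lambda>p. g (T3 p)) \<in> borel_measurable (lborel \<Otimes>\<^sub>M lborel)"
    using measurable_comp[OF T3_meas g] by (simp add: comp_def)
  have gm2: "(\<lambda>y. g (T3 (x1, y))) \<in> borel_measurable (lborel \<Otimes>\<^sub>M lborel)" for x1
  proof -
    have "continuous_on UNIV (\<lambda>y. T3 (x1, y))"
      by (rule continuous_on_compose2[OF T3_cont]) (auto intro!: continuous_intros)
    then have "(\<lambda>y. T3 (x1, y)) \<in> borel_measurable borel" by (rule borel_measurable_continuous_onI)
    then have "(\<lambda>y. T3 (x1, y)) \<in> borel_measurable (lborel \<Otimes>\<^sub>M lborel)" unfolding lborel_prod by simp
    from measurable_comp[OF this g] show ?thesis by (simp add: comp_def)
  qed
  have "(\<integral>\<^sup>+x. g x \<partial>lborel) = (\<integral>\<^sup>+x. g x \<partial>distr (lborel \<Otimes>\<^sub>M lborel) borel T3)"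
    by (simp add: lborel_T3)
  also have "\<dots> = (\<integral>\<^sup>+p. g (T3 p) \<partial>(lborel \<Otimes>\<^sub>M lborel))"
    by (rule nn_integral_distr[OF T3_meas]) (use g in simp)
  also have "\<dots> = (\<integral>\<^sup>+x1. \<integral>\<^sup>+y. g (T3 (x1, y)) \<partial>lborel \<partial>lborel)"
    by (rule lborel.nn_integral_fst[symmetric, OF gm])
  also have "\<dots> = (\<integral>\<^sup>+x1. \<integral>\<^sup>+y. g (T3 (x1, y)) \<partial>(lborel \<Otimes>\<^sub>M lborel) \<partial>lborel)"
    by (simp only: lborel_prod)
  also have "\<dots> = (\<integral>\<^sup>+x1. \<integral>\<^sup>+x2. \<integral>\<^sup>+x3. g (T3 (x1, x2, x3)) \<partial>lborel \<partial>lborel \<partial>lborel)"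
    by (intro nn_integral_cong lborel.nn_integral_fst[symmetric, OF gm2])
  finally show ?thesis .
qed

lemma quad_has_integral:
  assumes a: "a > 0"
  shows "((\<lambda>x. exp (- (a * x\<^sup>2 + 2 * \<beta> * x + \<gamma>) / 2)) has_integral
           sqrt (2 * pi / a) * exp (- (\<gamma> - \<beta>\<^sup>2 / a) / 2)) UNIV"
proof -
  have eq: "exp (- (a * x\<^sup>2 + 2 * \<beta> * x + \<gamma>) / 2) = exp (- (\<gamma> - \<beta>\<^sup>2 / a) / 2) * gf a (- \<beta> / a) x" for x
  proof -
    have e: "- (a * x\<^sup>2 + 2 * \<beta> * x + \<gamma>) / 2 = - (\<gamma> - \<beta>\<^sup>2 / a) / 2 + - (a * (x - - \<beta> / a)\<^sup>2) / 2"
      using a by (simp add: field_simps power2_eq_square)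
    show ?thesis unfolding gf_def e exp_add ..
  qed
  have "((\<lambda>x. exp (- (\<gamma> - \<beta>\<^sup>2 / a) / 2) * gf a (- \<beta> / a) x) has_integral
           exp (- (\<gamma> - \<beta>\<^sup>2 / a) / 2) * sqrt (2 * pi / a)) UNIV"
    by (rule has_integral_mult_right[OF gauss_has_integral[OF a]])
  then show ?thesis unfolding eq by (simp add: mult.commute)
qed

lemma quad_nn:
  assumes a: "a > 0"
  shows "(\<integral>\<^sup>+x. ennreal (exp (- (a * x\<^sup>2 + 2 * \<beta> * x + \<gamma>) / 2)) \<partial>lborel)
          = ennreal (sqrt (2 * pi / a) * exp (- (\<gamma> - \<beta>\<^sup>2 / a) / 2))"
  by (rule nn_integral_has_integral_lborel[OF _ _ quad_has_integral[OF a]]) auto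

lemma gf_nn:
  assumes a: "a > 0" and C: "C \<ge> 0"
  shows "(\<integral>\<^sup>+x. ennreal (C * gf a \<mu> x) \<partial>lborel) = ennreal (C * sqrt (2 * pi / a))"
proof (rule nn_integral_has_integral_lborel)
  show "(\<lambda>x. C * gf a \<mu> x) \<in> borel_measurable borel"
    using gf_cont[of UNIV a \<mu>] by (intro borel_measurable_continuous_onI continuous_intros)
  show "((\<lambda>x. C * gf a \<mu> x) has_integral C * sqrt (2 * pi / a)) UNIV"
    by (rule has_integral_mult_right[OF gauss_has_integral[OF a]])
  show "\<And>x. 0 \<le> C * gf a \<mu> x" using C gf_nonneg by simp
qed

lemma gauss_cont: "continuous_on UNIV (gauss B)"
  unfolding gauss_def by (intro continuous_intros) auto

lemma gauss_meas: "gauss B \<in> borel_measurable borel"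
  by (rule borel_measurable_continuous_onI[OF gauss_cont])

lemma qf2:
  fixes B :: "real^2^2"
  assumes "transpose B = B"
  shows "vector [x1, x2] \<bullet> (B *v vector [x1, x2]) = B$1$1 * x1\<^sup>2 + 2 * B$1$2 * x1 * x2 + B$2$2 * x2\<^sup>2"
proof -
  have "B$2$1 = B$1$2" using arg_cong[OF assms, of "\<lambda>M. M$1$2"] by (simp add: transpose_def)
  then show ?thesis
    by (simp add: inner_vec_def matrix_vector_mult_def sum_2 power2_eq_square algebra_simps)
qed

lemma qf3:
  fixes B :: "real^3^3"
  assumes "transpose B = B"
  shows "vector [x1, x2, x3] \<bullet> (B *v vector [x1, x2, x3]) =
     B$1$1 * x1\<^sup>2 + B$2$2 * x2\<^sup>2 + B$3$3 * x3\<^sup>2 + 2 * B$1$2 * x1 * x2 + 2 * B$1$3 * x1 * x3 + 2 * B$2$3 * x2 * x3"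
proof -
  have "B$2$1 = B$1$2" using arg_cong[OF assms, of "\<lambda>M. M$1$2"] by (simp add: transpose_def)
  moreover have "B$3$1 = B$1$3" using arg_cong[OF assms, of "\<lambda>M. M$1$3"] by (simp add: transpose_def)
  moreover have "B$3$2 = B$2$3" using arg_cong[OF assms, of "\<lambda>M. M$2$3"] by (simp add: transpose_def)
  ultimately show ?thesis
    by (simp add: inner_vec_def matrix_vector_mult_def sum_3 power2_eq_square algebra_simps)
qed

lemma eta_nonneg: "0 \<le> eta" unfolding eta_def by simp

lemma quad_split:
  assumes a: "a > 0"
  shows "exp (- (a * x\<^sup>2 + 2 * \<beta> * x + \<gamma>) / 2) = exp (- (\<gamma> - \<beta>\<^sup>2 / a) / 2) * gf a (- \<beta> / a) x"
proof -
  have e: "- (a * x\<^sup>2 + 2 * \<beta> * x + \<gamma>) / 2 = - (\<gamma> - \<beta>\<^sup>2 / a) / 2 + - (a * (x - - \<beta> / a)\<^sup>2) / 2"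
    using a by (simp add: field_simps power2_eq_square)
  show ?thesis unfolding gf_def e exp_add ..
qed

lemma vec2_nz: "vector [x1, x2] \<noteq> (0::real^2)" if "x1 \<noteq> 0 \<or> x2 \<noteq> 0"
proof
  assume "vector [x1, x2] = (0::real^2)"
  then have "(vector [x1, x2] :: real^2) $ 1 = 0" "(vector [x1, x2] :: real^2) $ 2 = 0" by simp_all
  then show False using that by simp
qed

lemma vec3_nz: "vector [x1, x2, x3] \<noteq> (0::real^3)" if "x1 \<noteq> 0 \<or> x2 \<noteq> 0 \<or> x3 \<noteq> 0"
proof
  assume "vector [x1, x2, x3] = (0::real^3)"
  then have "(vector [x1, x2, x3] :: real^3) $ 1 = 0" "(vector [x1, x2, x3] :: real^3) $ 2 = 0"
    "(vector [x1, x2, x3] :: real^3) $ 3 = 0" by simp_all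
  then show False using that by simp
qed

lemma part_a:
  fixes B :: "real^2^2"
  assumes n: "n \<ge> 1" and pd: "pos_def_mat B"
  shows "integral UNIV (\<lambda>x2::real. (2 / sqrt (real n)) *
               (\<Sum>x1\<in>grid n. gauss B (vector [x1, x2])))
            \<le> (1 + eta * B $ 1 $ 1 / real n) * integral UNIV (gauss B)"
proof -
  have sym: "transpose B = B" and pos: "\<And>x. x \<noteq> 0 \<Longrightarrow> x \<bullet> (B *v x) > 0"
    using pd unfolding pos_def_mat_def by auto
  define a where "a = B$2$2"
  define p where "p = B$1$2"
  define c where "c = B$1$1"
  have Q: "gauss B (vector [x1, x2]) = exp (- (a * x2\<^sup>2 + 2 * (p * x1) * x2 + c * x1\<^sup>2) / 2)" for x1 x2
    unfolding gauss_def qf2[OF sym] a_def p_def c_def by (simp add: algebra_simps)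
  have a: "a > 0" using pos[OF vec2_nz[of 0 1]] unfolding qf2[OF sym] a_def by simp
  define d where "d = c - p\<^sup>2 / a"
  have d: "d > 0"
  proof -
    have "0 < c * a\<^sup>2 + 2 * p * a * (- p) + a * (- p)\<^sup>2"
      using pos[OF vec2_nz[of a "- p"]] a unfolding qf2[OF sym] a_def p_def c_def by simp
    also have "c * a\<^sup>2 + 2 * p * a * (- p) + a * (- p)\<^sup>2 = a\<^sup>2 * d"
      unfolding d_def using a by (simp add: field_simps power2_eq_square)
    finally show ?thesis using a by (simp add: zero_less_mult_iff)
  qed
  define C where "C = sqrt (2 * pi / a)"
  have C: "C \<ge> 0" using a by (simp add: C_def)
  have ex: "exp (- (c * x1\<^sup>2 - (p * x1)\<^sup>2 / a) / 2) = gf d 0 x1" for x1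
  proof -
    have "- (c * x1\<^sup>2 - (p * x1)\<^sup>2 / a) / 2 = - (d * (x1 - 0)\<^sup>2) / 2"
      unfolding d_def using a by (simp add: field_simps power2_eq_square)
    then show ?thesis unfolding gf_def by simp
  qed
  have inner: "((\<lambda>x2. gauss B (vector [x1, x2])) has_integral C * gf d 0 x1) UNIV" for x1
    using quad_has_integral[OF a, of "p * x1" "c * x1\<^sup>2"] unfolding Q[symmetric] ex C_def .
  have innernn: "(\<integral>\<^sup>+x2. ennreal (gauss B (vector [x1, x2])) \<partial>lborel) = ennreal (C * gf d 0 x1)" for x1
  proof (rule nn_integral_has_integral_lborel[OF _ _ inner])
    show "(\<lambda>x2. gauss B (vector [x1, x2])) \<in> borel_measurable borel"
      unfolding Q by (intro borel_measurable_continuous_onI continuous_intros) auto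
    show "\<And>x. 0 \<le> gauss B (vector [x1, x])" unfolding gauss_def by simp
  qed
  have nn: "(\<integral>\<^sup>+x. ennreal (gauss B x) \<partial>lborel) = ennreal (C * sqrt (2 * pi / d))"
  proof -
    have "(\<integral>\<^sup>+x. ennreal (gauss B x) \<partial>lborel) = (\<integral>\<^sup>+x1. \<integral>\<^sup>+x2. ennreal (gauss B (T2 (x1, x2))) \<partial>lborel \<partial>lborel)"
      by (rule nn2) (rule measurable_compose[OF gauss_meas measurable_ennreal])
    also have "\<dots> = (\<integral>\<^sup>+x1. ennreal (C * gf d 0 x1) \<partial>lborel)"
      unfolding T2_vector innernn ..
    also have "\<dots> = ennreal (C * sqrt (2 * pi / d))" by (rule gf_nn[OF d C])
    finally show ?thesis .
  qed
  have I: "(gauss B has_integral C * sqrt (2 * pi / d)) UNIV"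
    by (rule nn_integral_has_integral[OF gauss_meas _ nn]) (use C d in \<open>auto simp: gauss_def\<close>)
  have L: "((\<lambda>x2. (2 / sqrt (real n)) * (\<Sum>x1\<in>grid n. gauss B (vector [x1, x2]))) has_integral
             (2 / sqrt (real n)) * (\<Sum>x1\<in>grid n. C * gf d 0 x1)) UNIV"
    by (intro has_integral_mult_right has_integral_sum) (auto simp: grid_def inner)
  have "(2 / sqrt (real n)) * (\<Sum>x1\<in>grid n. C * gf d 0 x1) = C * ((2 / sqrt (real n)) * (\<Sum>x1\<in>grid n. gf d 0 x1))"
    by (simp only: sum_distrib_left mult.left_commute)
  also have "\<dots> \<le> C * ((1 + eta * d / real n) * sqrt (2 * pi / d))"
    by (rule mult_left_mono[OF grid_bound[OF d n] C])
  also have "\<dots> \<le> C * ((1 + eta * c / real n) * sqrt (2 * pi / d))"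
  proof -
    have "d \<le> c" unfolding d_def using a by simp
    then have "eta * d \<le> eta * c" using eta_nonneg by (rule mult_left_mono)
    then have "eta * d / real n \<le> eta * c / real n" using n by (intro divide_right_mono) auto
    then show ?thesis using C d by (intro mult_left_mono mult_right_mono) auto
  qed
  also have "\<dots> = (1 + eta * c / real n) * (C * sqrt (2 * pi / d))" by simp
  finally show ?thesis
    unfolding integral_unique[OF L] integral_unique[OF I] c_def .
qed

lemma ident3:
  fixes c11 c22 c33 c12 c13 c23 x1 x2 x3 :: real
  assumes c33: "c33 \<noteq> 0" and a2: "c22 - c23\<^sup>2 / c33 \<noteq> 0"
  defines "a2' \<equiv> c22 - c23\<^sup>2 / c33"
  defines "q \<equiv> c12 - c13 * c23 / c33"
  defines "r \<equiv> c11 - c13\<^sup>2 / c33"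
  shows "c11 * x1\<^sup>2 + c22 * x2\<^sup>2 + c33 * x3\<^sup>2 + 2 * c12 * x1 * x2 + 2 * c13 * x1 * x3 + 2 * c23 * x2 * x3
     = c33 * (x3 + (c13 * x1 + c23 * x2) / c33)\<^sup>2 + a2' * (x2 + q * x1 / a2')\<^sup>2 + (r - q\<^sup>2 / a2') * x1\<^sup>2"
proof -
  have s1: "c11 * x1\<^sup>2 + c22 * x2\<^sup>2 + c33 * x3\<^sup>2 + 2 * c12 * x1 * x2 + 2 * c13 * x1 * x3 + 2 * c23 * x2 * x3
     = c33 * (x3 + (c13 * x1 + c23 * x2) / c33)\<^sup>2 + (a2' * x2\<^sup>2 + 2 * q * x1 * x2 + r * x1\<^sup>2)"
    unfolding a2'_def q_def r_def using c33 by (simp add: field_simps power2_eq_square)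
  have a2'': "a2' \<noteq> 0" using a2 unfolding a2'_def .
  have s2: "a2' * x2\<^sup>2 + 2 * q * x1 * x2 + r * x1\<^sup>2 = a2' * (x2 + q * x1 / a2')\<^sup>2 + (r - q\<^sup>2 / a2') * x1\<^sup>2"
    using a2'' by (simp add: field_simps power2_eq_square)
  show ?thesis unfolding s1 s2 by (simp only: add.assoc)
qed

lemma part_b:
  fixes B :: "real^3^3"
  assumes n: "n \<ge> 1" and n': "n' \<ge> 1" and pd: "pos_def_mat B"
  shows "integral UNIV (\<lambda>x3::real. (2 / sqrt (real n)) * (2 / sqrt (real n')) *
               (\<Sum>x1\<in>grid n. \<Sum>x2\<in>grid n'. gauss B (vector [x1, x2, x3])))
            \<le> (1 + eta * B $ 1 $ 1 / real n) * (1 + eta * B $ 2 $ 2 / real n')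
               * integral UNIV (gauss B)"
proof -
  have sym: "transpose B = B" and pos: "\<And>x. x \<noteq> 0 \<Longrightarrow> x \<bullet> (B *v x) > 0"
    using pd unfolding pos_def_mat_def by auto
  define c11 where "c11 = B$1$1"
  define c22 where "c22 = B$2$2"
  define c33 where "c33 = B$3$3"
  define c12 where "c12 = B$1$2"
  define c13 where "c13 = B$1$3"
  define c23 where "c23 = B$2$3"
  have QF: "vector [x1, x2, x3] \<bullet> (B *v vector [x1, x2, x3]) =
     c11 * x1\<^sup>2 + c22 * x2\<^sup>2 + c33 * x3\<^sup>2 + 2 * c12 * x1 * x2 + 2 * c13 * x1 * x3 + 2 * c23 * x2 * x3" for x1 x2 x3
    unfolding qf3[OF sym] c11_def c22_def c33_def c12_def c13_def c23_def ..
  have a3: "c33 > 0" using pos[OF vec3_nz[of 0 0 1]] unfolding QF by simp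
  define a2 where "a2 = c22 - c23\<^sup>2 / c33"
  define q where "q = c12 - c13 * c23 / c33"
  define r where "r = c11 - c13\<^sup>2 / c33"
  define d1 where "d1 = r - q\<^sup>2 / a2"
  have a2: "a2 > 0"
  proof -
    have "0 < c22 * c33\<^sup>2 + c33 * (- c23)\<^sup>2 + 2 * c23 * c33 * (- c23)"
      using pos[OF vec3_nz[of 0 c33 "- c23"]] a3 unfolding QF by simp
    also have "c22 * c33\<^sup>2 + c33 * (- c23)\<^sup>2 + 2 * c23 * c33 * (- c23) = c33\<^sup>2 * a2"
      unfolding a2_def using a3 by (simp add: field_simps power2_eq_square)
    finally show ?thesis using a3 by (simp add: zero_less_mult_iff)
  qed
  have id: "c11 * x1\<^sup>2 + c22 * x2\<^sup>2 + c33 * x3\<^sup>2 + 2 * c12 * x1 * x2 + 2 * c13 * x1 * x3 + 2 * c23 * x2 * x3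
     = c33 * (x3 + (c13 * x1 + c23 * x2) / c33)\<^sup>2 + a2 * (x2 + q * x1 / a2)\<^sup>2 + d1 * x1\<^sup>2" for x1 x2 x3
    unfolding a2_def q_def r_def d1_def
    by (rule ident3) (use a3 a2 in \<open>auto simp: a2_def\<close>)
  have d1: "d1 > 0"
  proof -
    define y2 where "y2 = - q / a2"
    define y3 where "y3 = - (c13 * 1 + c23 * y2) / c33"
    have "0 < vector [1, y2, y3] \<bullet> (B *v vector [1, y2, y3])" by (rule pos[OF vec3_nz]) simp
    also have "\<dots> = d1" unfolding QF id y3_def y2_def using a3 a2 by (simp add: field_simps)
    finally show ?thesis .
  qed
  have Q3: "gauss B (vector [x1, x2, x3]) = exp (- (c33 * x3\<^sup>2 + 2 * (c13 * x1 + c23 * x2) * x3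
              + (c11 * x1\<^sup>2 + c22 * x2\<^sup>2 + 2 * c12 * x1 * x2)) / 2)" for x1 x2 x3
    unfolding gauss_def QF by (simp add: algebra_simps)
  define G where "G x1 x2 = exp (- (a2 * x2\<^sup>2 + 2 * (q * x1) * x2 + r * x1\<^sup>2) / 2)" for x1 x2
  have ex3: "exp (- ((c11 * x1\<^sup>2 + c22 * x2\<^sup>2 + 2 * c12 * x1 * x2) - (c13 * x1 + c23 * x2)\<^sup>2 / c33) / 2) = G x1 x2" for x1 x2
  proof -
    have "(c11 * x1\<^sup>2 + c22 * x2\<^sup>2 + 2 * c12 * x1 * x2) - (c13 * x1 + c23 * x2)\<^sup>2 / c33
        = a2 * x2\<^sup>2 + 2 * (q * x1) * x2 + r * x1\<^sup>2"
      unfolding a2_def q_def r_def using a3 by (simp add: field_simps power2_eq_square)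
    then show ?thesis unfolding G_def by simp
  qed
  have ex2: "exp (- (r * x1\<^sup>2 - (q * x1)\<^sup>2 / a2) / 2) = gf d1 0 x1" for x1
  proof -
    have "- (r * x1\<^sup>2 - (q * x1)\<^sup>2 / a2) / 2 = - (d1 * (x1 - 0)\<^sup>2) / 2"
      unfolding d1_def using a2 by (simp add: field_simps power2_eq_square)
    then show ?thesis unfolding gf_def by simp
  qed
  define C3 where "C3 = sqrt (2 * pi / c33)"
  define C2 where "C2 = sqrt (2 * pi / a2)"
  have C3: "C3 \<ge> 0" and C2: "C2 \<ge> 0" using a3 a2 by (simp_all add: C3_def C2_def)
  have inner3: "((\<lambda>x3. gauss B (vector [x1, x2, x3])) has_integral C3 * G x1 x2) UNIV" for x1 x2
    using quad_has_integral[OF a3, of "c13 * x1 + c23 * x2" "c11 * x1\<^sup>2 + c22 * x2\<^sup>2 + 2 * c12 * x1 * x2"]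
    unfolding Q3[symmetric] ex3 C3_def .
  have inner2: "((\<lambda>x2. G x1 x2) has_integral C2 * gf d1 0 x1) UNIV" for x1
    using quad_has_integral[OF a2, of "q * x1" "r * x1\<^sup>2"] unfolding G_def[symmetric] ex2 C2_def .
  have splitG: "G x1 x2 = gf d1 0 x1 * gf a2 (- (q * x1) / a2) x2" for x1 x2
    using quad_split[OF a2, of x2 "q * x1" "r * x1\<^sup>2"] unfolding G_def[symmetric] ex2 .
  have G0: "0 \<le> G x1 x2" for x1 x2 unfolding G_def by simp
  have nn3i: "(\<integral>\<^sup>+x3. ennreal (gauss B (vector [x1, x2, x3])) \<partial>lborel) = ennreal (C3 * G x1 x2)" for x1 x2
  proof (rule nn_integral_has_integral_lborel[OF _ _ inner3])
    show "(\<lambda>x3. gauss B (vector [x1, x2, x3])) \<in> borel_measurable borel"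
      unfolding Q3 by (intro borel_measurable_continuous_onI continuous_intros) auto
    show "\<And>x. 0 \<le> gauss B (vector [x1, x2, x])" unfolding gauss_def by simp
  qed
  have nn2i: "(\<integral>\<^sup>+x2. ennreal (C3 * G x1 x2) \<partial>lborel) = ennreal (C3 * (C2 * gf d1 0 x1))" for x1
  proof (rule nn_integral_has_integral_lborel)
    show "(\<lambda>x2. C3 * G x1 x2) \<in> borel_measurable borel"
      unfolding G_def by (intro borel_measurable_continuous_onI continuous_intros) auto
    show "\<And>x. 0 \<le> C3 * G x1 x" using C3 G0 by simp
    show "((\<lambda>x2. C3 * G x1 x2) has_integral C3 * (C2 * gf d1 0 x1)) UNIV"
      by (rule has_integral_mult_right[OF inner2])
  qed
  have nn: "(\<integral>\<^sup>+x. ennreal (gauss B x) \<partial>lborel) = ennreal ((C3 * C2) * sqrt (2 * pi / d1))"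
  proof -
    have "(\<integral>\<^sup>+x. ennreal (gauss B x) \<partial>lborel)
        = (\<integral>\<^sup>+x1. \<integral>\<^sup>+x2. \<integral>\<^sup>+x3. ennreal (gauss B (T3 (x1, x2, x3))) \<partial>lborel \<partial>lborel \<partial>lborel)"
      by (rule nn3) (rule measurable_compose[OF gauss_meas measurable_ennreal])
    also have "\<dots> = (\<integral>\<^sup>+x1. ennreal ((C3 * C2) * gf d1 0 x1) \<partial>lborel)"
      unfolding T3_vector nn3i nn2i by (simp add: mult.assoc)
    also have "\<dots> = ennreal ((C3 * C2) * sqrt (2 * pi / d1))"
      by (rule gf_nn[OF d1]) (use C3 C2 in simp)
    finally show ?thesis .
  qed
  have I: "(gauss B has_integral (C3 * C2) * sqrt (2 * pi / d1)) UNIV"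
    by (rule nn_integral_has_integral[OF gauss_meas _ nn]) (use C3 C2 d1 in \<open>auto simp: gauss_def\<close>)
  have fin: "finite (grid k)" for k unfolding grid_def by simp
  have L: "((\<lambda>x3. (2 / sqrt (real n)) * (2 / sqrt (real n')) *
               (\<Sum>x1\<in>grid n. \<Sum>x2\<in>grid n'. gauss B (vector [x1, x2, x3]))) has_integral
             (2 / sqrt (real n)) * (2 / sqrt (real n')) * (\<Sum>x1\<in>grid n. \<Sum>x2\<in>grid n'. C3 * G x1 x2)) UNIV"
    by (intro has_integral_mult_right has_integral_sum fin inner3)
  define K where "K = (1 + eta * a2 / real n') * C2"
  have K: "K \<ge> 0" unfolding K_def using eta_nonneg a2 n' C2 by simp
  have B1: "(2 / sqrt (real n')) * (\<Sum>x2\<in>grid n'. gf a2 (- (q * x1) / a2) x2) \<le> K" for x1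
    unfolding K_def C2_def by (rule grid_bound[OF a2 n'])
  have E0: "(2 / sqrt (real n)) * (2 / sqrt (real n')) * (\<Sum>x1\<in>grid n. \<Sum>x2\<in>grid n'. C3 * G x1 x2)
      = C3 * ((2 / sqrt (real n)) * (\<Sum>x1\<in>grid n. gf d1 0 x1 *
            ((2 / sqrt (real n')) * (\<Sum>x2\<in>grid n'. gf a2 (- (q * x1) / a2) x2))))"
    unfolding splitG by (simp add: sum_distrib_left mult_ac)
  have "(\<Sum>x1\<in>grid n. gf d1 0 x1 * ((2 / sqrt (real n')) * (\<Sum>x2\<in>grid n'. gf a2 (- (q * x1) / a2) x2)))
      \<le> (\<Sum>x1\<in>grid n. gf d1 0 x1 * K)"
    by (intro sum_mono mult_left_mono B1 gf_nonneg)
  also have "\<dots> = K * (\<Sum>x1\<in>grid n. gf d1 0 x1)" by (simp add: sum_distrib_left mult_ac)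
  finally have B2: "(\<Sum>x1\<in>grid n. gf d1 0 x1 * ((2 / sqrt (real n')) * (\<Sum>x2\<in>grid n'. gf a2 (- (q * x1) / a2) x2)))
      \<le> K * (\<Sum>x1\<in>grid n. gf d1 0 x1)" .
  have hpos: "0 \<le> 2 / sqrt (real n)" by simp
  have "(2 / sqrt (real n)) * (2 / sqrt (real n')) * (\<Sum>x1\<in>grid n. \<Sum>x2\<in>grid n'. C3 * G x1 x2)
      \<le> C3 * ((2 / sqrt (real n)) * (K * (\<Sum>x1\<in>grid n. gf d1 0 x1)))"
    unfolding E0 by (intro mult_left_mono C3 hpos B2)
  also have "\<dots> = C3 * K * ((2 / sqrt (real n)) * (\<Sum>x1\<in>grid n. gf d1 0 x1))" by (simp add: mult_ac)
  also have "\<dots> \<le> C3 * K * ((1 + eta * d1 / real n) * sqrt (2 * pi / d1))"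
    by (rule mult_left_mono[OF grid_bound[OF d1 n]]) (use C3 K in simp)
  also have "\<dots> = (1 + eta * a2 / real n') * (1 + eta * d1 / real n) * ((C3 * C2) * sqrt (2 * pi / d1))"
    unfolding K_def by (simp add: mult_ac)
  also have "\<dots> \<le> (1 + eta * c22 / real n') * (1 + eta * c11 / real n) * ((C3 * C2) * sqrt (2 * pi / d1))"
  proof -
    have "a2 \<le> c22" unfolding a2_def using a3 by simp
    then have "eta * a2 \<le> eta * c22" using eta_nonneg by (rule mult_left_mono)
    then have f1: "1 + eta * a2 / real n' \<le> 1 + eta * c22 / real n'" using n' by (simp add: divide_right_mono)
    have "d1 \<le> r" unfolding d1_def using a2 by simp
    also have "r \<le> c11" unfolding r_def using a3 by simp
    finally have "eta * d1 \<le> eta * c11" using eta_nonneg by (rule mult_left_mono)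
    then have f2: "1 + eta * d1 / real n \<le> 1 + eta * c11 / real n" using n by (simp add: divide_right_mono)
    have p1: "0 \<le> 1 + eta * a2 / real n'" using eta_nonneg a2 by simp
    have p2: "0 \<le> 1 + eta * d1 / real n" using eta_nonneg d1 by simp
    have p3: "0 \<le> (C3 * C2) * sqrt (2 * pi / d1)" using C3 C2 d1 by simp
    have "(1 + eta * a2 / real n') * (1 + eta * d1 / real n) \<le> (1 + eta * c22 / real n') * (1 + eta * c11 / real n)"
      using f1 f2 p1 p2 by (intro mult_mono) auto
    then show ?thesis using p3 by (rule mult_right_mono)
  qed
  also have "\<dots> = (1 + eta * c11 / real n) * (1 + eta * c22 / real n') * ((C3 * C2) * sqrt (2 * pi / d1))"
    by (simp add: mult_ac)
  finally show ?thesis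
    unfolding integral_unique[OF L] integral_unique[OF I] c11_def c22_def .
qed

theorem mainTheorem16:
  shows "(\<forall>(n::nat) (B::real^2^2). n \<ge> 1 \<longrightarrow> pos_def_mat B \<longrightarrow>
            integral UNIV (\<lambda>x2::real. (2 / sqrt (real n)) *
               (\<Sum>x1\<in>grid n. gauss B (vector [x1, x2])))
            \<le> (1 + eta * B $ 1 $ 1 / real n) * integral UNIV (gauss B))
       \<and> (\<forall>(n::nat) (n'::nat) (B::real^3^3). n \<ge> 1 \<longrightarrow> n' \<ge> 1 \<longrightarrow> pos_def_mat B \<longrightarrow>
            integral UNIV (\<lambda>x3::real. (2 / sqrt (real n)) * (2 / sqrt (real n')) *
               (\<Sum>x1\<in>grid n. \<Sum>x2\<in>grid n'. gauss B (vector [x1, x2, x3])))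
            \<le> (1 + eta * B $ 1 $ 1 / real n) * (1 + eta * B $ 2 $ 2 / real n')
               * integral UNIV (gauss B))"
  using part_a part_b by blast

end
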